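(* For all sufficiently large $n$ the following holds. Let $m=cn$ where $10^4\le c\le n/10^{10}$, and let $\beta^*=\max\{e^{-c/6},1/n\}$. Then with probability at least $1-n^{-15}$ over $G\sim\mathcal{G}_{n,m}$, for all $\beta$ with $\beta^*\le\beta\le 1$, the graph $G$ is $(\beta,\beta/240)$-asymmetric.
   Context: $\mathcal{G}_{n,m}$ is the uniform distribution over simple graphs on $n$ vertices with exactly $m$ edges. For a graph $G=(V,E)$ and a permutation $\pi$ of $V$, $\mathrm{AUT}(G;\pi)=|\{e\in E:\pi(e)\in E\}|/|E|$. A graph $G$ is $(\beta,\gamma)$-asymmetric if every permutation $\pi$ of $V(G)$ having at most a $(1-\beta)$ fraction of the vertices as fixed points satisfies $\mathrm{AUT}(G;\pi)<1-\gamma$. *)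

theory Defs
  imports "HOL-Analysis.Analysis" "HOL-Combinatorics.Permutations"
begin

text \<open>Simple graphs on vertex set {0..<n}: an edge set is a set of 2-element subsets.\<close>

definition all_edges :: "nat \<Rightarrow> nat set set" where
  "all_edges n = {e. e \<subseteq> {0..<n} \<and> card e = 2}"

text \<open>Support of G(n,m): all simple graphs on {0..<n} with exactly m edges (uniform measure).\<close>
definition graphs_nm :: "nat \<Rightarrow> nat \<Rightarrow> nat set set set" where
  "graphs_nm n m = {E. E \<subseteq> all_edges n \<and> card E = m}"

definition AUT :: "nat set set \<Rightarrow> (nat \<Rightarrow> nat) \<Rightarrow> real" where
  "AUT E \<pi> = real (card {e \<in> E. \<pi> ` e \<in> E}) / real (card E)"

definition fixed_points :: "nat \<Rightarrow> (nat \<Rightarrow> nat) \<Rightarrow> nat set" where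
  "fixed_points n \<pi> = {v \<in> {0..<n}. \<pi> v = v}"

definition asymmetric :: "nat \<Rightarrow> nat set set \<Rightarrow> real \<Rightarrow> real \<Rightarrow> bool" where
  "asymmetric n E \<beta> \<gamma> \<longleftrightarrow>
     (\<forall>\<pi>. \<pi> permutes {0..<n} \<and> real (card (fixed_points n \<pi>)) \<le> (1 - \<beta>) * real n
          \<longrightarrow> AUT E \<pi> < 1 - \<gamma>)"

definition prob_Gnm :: "nat \<Rightarrow> nat \<Rightarrow> (nat set set \<Rightarrow> bool) \<Rightarrow> real" where
  "prob_Gnm n m P = real (card {E \<in> graphs_nm n m. P E}) / real (card (graphs_nm n m))"

end

theory Submission
  imports Defs "HOL-Real_Asymp.Real_Asymp"
begin

lemma choose_step: "real (n choose Suc k) * Suc k = real (n choose k) * (real n - real k)"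
proof -
  have "(n - k) * (n choose k) = Suc k * (n choose Suc k)"
    using binomial_absorb_comp[of n k] binomial_absorption[of k n] by simp
  then have "real ((n - k) * (n choose k)) = real (Suc k * (n choose Suc k))" by simp
  moreover have "real (n choose k) * (real n - real k) = real ((n - k) * (n choose k))"
  proof (cases "k \<le> n")
    case True then show ?thesis by (simp add: of_nat_diff)
  next
    case False then show ?thesis by (simp add: binomial_eq_0)
  qed
  ultimately show ?thesis by (simp add: algebra_simps)
qed

lemma choose_ratio_sub:
  assumes "r \<le> m" "m \<le> N"
  shows "real ((N - r) choose (m - r)) \<le> (real m / real N)^r * real (N choose m)"
  using assms
proof (induction r arbitrary: N m)
  case 0 then show ?case by simp
next
  case (Suc r)
  obtain N' m' where N: "N = Suc N'" and M: "m = Suc m'" using Suc.prems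
    by (metis Suc_le_D le_trans)
  have ih: "real ((N' - r) choose (m' - r)) \<le> (real m' / real N')^r * real (N' choose m')"
    using Suc.IH[of m' N'] Suc.prems N M by simp
  have eq: "real (N' choose m') = real (N choose m) * real m / real N"
  proof -
    have "real (Suc m' * (Suc N' choose Suc m')) = real (Suc N' * (N' choose m'))"
      using Suc_times_binomial[of m' N'] by presburger
    then have "real m * real (N choose m) = real N * real (N' choose m')"
      unfolding N M of_nat_mult by simp
    then show ?thesis using N by (simp add: field_simps)
  qed
  have rat: "real m' / real N' \<le> real m / real N"
  proof (cases "N' = 0")
    case True then show ?thesis by simp
  next
    case False
    then show ?thesis using Suc.prems N M by (simp add: field_simps)
  qed
  have "real ((N - Suc r) choose (m - Suc r)) = real ((N' - r) choose (m' - r))"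
    using N M by simp
  also have "\<dots> \<le> (real m' / real N')^r * real (N' choose m')" by (rule ih)
  also have "\<dots> \<le> (real m / real N)^r * real (N' choose m')"
    by (intro mult_right_mono power_mono rat) auto
  also have "\<dots> = (real m / real N)^Suc r * real (N choose m)"
    by (simp add: eq field_simps)
  finally show ?case .
qed

lemma choose_ratio_top:
  assumes "a \<le> b" "0 < b"
  shows "real (a choose s) \<le> (real a / real b)^s * real (b choose s)"
proof (induction s)
  case 0 then show ?case by simp
next
  case (Suc s)
  show ?case
  proof (cases "s \<le> a")
    case False
    then have "a choose Suc s = 0" by (simp add: binomial_eq_0)
    then have "real (a choose Suc s) = 0" by (simp only: of_nat_0)
    then show ?thesis using assms by (simp del: binomial_eq_0_iff)
  next
    case True
    have key: "real a - real s \<le> (real a / real b) * (real b - real s)"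
      using assms True by (simp add: field_simps mult_right_mono)
    have "real (a choose Suc s) * Suc s = real (a choose s) * (real a - real s)"
      by (rule choose_step)
    also have "\<dots> \<le> ((real a / real b)^s * real (b choose s)) * (real a - real s)"
      using Suc.IH True by (intro mult_right_mono) auto
    also have "\<dots> \<le> ((real a / real b)^s * real (b choose s)) * ((real a / real b) * (real b - real s))"
      by (intro mult_left_mono key) auto
    also have "\<dots> = (real a / real b)^Suc s * (real (b choose s) * (real b - real s))"
      by (simp add: field_simps)
    also have "\<dots> = (real a / real b)^Suc s * (real (b choose Suc s) * Suc s)"
      using choose_step[of b s] by simp
    also have "\<dots> = ((real a / real b)^Suc s * real (b choose Suc s)) * Suc s"
      by (simp only: mult.assoc)
    finally show ?thesis by (rule mult_right_le_imp_le) simp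
  qed
qed

lemma card_supsets:
  assumes U: "finite U" and R: "R \<subseteq> U" and r: "card R \<le> m"
  shows "card {E. E \<subseteq> U \<and> card E = m \<and> R \<subseteq> E} = (card U - card R) choose (m - card R)"
proof -
  have fR: "finite R" using U R finite_subset by blast
  have "bij_betw (\<lambda>E. E - R) {E. E \<subseteq> U \<and> card E = m \<and> R \<subseteq> E} {B. B \<subseteq> U - R \<and> card B = m - card R}"
  proof (rule bij_betw_byWitness[where f'="\<lambda>B. B \<union> R"])
    show "\<forall>a\<in>{E. E \<subseteq> U \<and> card E = m \<and> R \<subseteq> E}. a - R \<union> R = a" by auto
    show "\<forall>a'\<in>{B. B \<subseteq> U - R \<and> card B = m - card R}. a' \<union> R - R = a'" by auto
    show "(\<lambda>E. E - R) ` {E. E \<subseteq> U \<and> card E = m \<and> R \<subseteq> E} \<subseteq> {B. B \<subseteq> U - R \<and> card B = m - card R}"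
    proof safe
      fix E assume "E \<subseteq> U" "R \<subseteq> E" "m = card E"
      then show "card (E - R) = card E - card R"
        by (meson card_Diff_subset U fR finite_subset)
    qed auto
    show "(\<lambda>B. B \<union> R) ` {B. B \<subseteq> U - R \<and> card B = m - card R} \<subseteq> {E. E \<subseteq> U \<and> card E = m \<and> R \<subseteq> E}"
    proof safe
      fix B assume B: "B \<subseteq> U - R" "card B = m - card R"
      then have "finite B" using U finite_subset by blast
      moreover have "B \<inter> R = {}" using B by auto
      ultimately show "card (B \<union> R) = m" using B r fR by (simp add: card_Un_disjoint)
    qed (use R in auto)
  qed
  then have "card {E. E \<subseteq> U \<and> card E = m \<and> R \<subseteq> E} = card {B. B \<subseteq> U - R \<and> card B = m - card R}"
    by (rule bij_betw_same_card)
  also have "\<dots> = card (U - R) choose (m - card R)" using U by (simp add: n_subsets)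
  also have "card (U - R) = card U - card R" using R fR by (simp add: card_Diff_subset)
  finally show ?thesis .
qed

lemma prob_supset:
  assumes U: "finite U" and m: "m \<le> card U" and fR: "finite R"
  shows "real (card {E. E \<subseteq> U \<and> card E = m \<and> R \<subseteq> E})
     \<le> (real m / real (card U))^(card R) * real (card {E. E \<subseteq> U \<and> card E = m})"
proof (cases "R \<subseteq> U \<and> card R \<le> m")
  case True
  have "real (card {E. E \<subseteq> U \<and> card E = m \<and> R \<subseteq> E}) = real ((card U - card R) choose (m - card R))"
    using card_supsets[OF U] True by simp
  also have "\<dots> \<le> (real m / real (card U))^(card R) * real (card U choose m)"
    using True m by (intro choose_ratio_sub) auto
  finally show ?thesis using U by (simp add: n_subsets)
next
  case False
  have emp: "{E. E \<subseteq> U \<and> card E = m \<and> R \<subseteq> E} = {}"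
  proof (rule ccontr)
    assume "{E. E \<subseteq> U \<and> card E = m \<and> R \<subseteq> E} \<noteq> {}"
    then obtain E where E: "E \<subseteq> U" "card E = m" "R \<subseteq> E" by auto
    then have "finite E" using U finite_subset by blast
    then have "card R \<le> m" using E card_mono by blast
    then show False using E False by auto
  qed
  show ?thesis unfolding emp by simp
qed

lemma card_exact_inter:
  assumes U: "finite U" and D: "D \<subseteq> U" and J: "J \<subseteq> D" and j: "card J \<le> m"
  shows "card {E. E \<subseteq> U \<and> card E = m \<and> E \<inter> D = J} = (card U - card D) choose (m - card J)"
proof -
  have fD: "finite D" using U D finite_subset by blast
  have fJ: "finite J" using fD J finite_subset by blast
  have "bij_betw (\<lambda>E. E - J) {E. E \<subseteq> U \<and> card E = m \<and> E \<inter> D = J} {B. B \<subseteq> U - D \<and> card B = m - card J}"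
  proof (rule bij_betw_byWitness[where f'="\<lambda>B. B \<union> J"])
    show "\<forall>a\<in>{E. E \<subseteq> U \<and> card E = m \<and> E \<inter> D = J}. a - J \<union> J = a" by auto
    show "\<forall>a'\<in>{B. B \<subseteq> U - D \<and> card B = m - card J}. a' \<union> J - J = a'" using J by auto
    show "(\<lambda>E. E - J) ` {E. E \<subseteq> U \<and> card E = m \<and> E \<inter> D = J} \<subseteq> {B. B \<subseteq> U - D \<and> card B = m - card J}"
    proof (rule image_subsetI)
      fix E assume "E \<in> {E. E \<subseteq> U \<and> card E = m \<and> E \<inter> D = J}"
      then have E: "E \<subseteq> U" "E \<inter> D = J" "m = card E" by auto
      then have "card (E - J) = card E - card J"
        by (metis card_Diff_subset U fJ finite_subset Int_lower1)
      then show "E - J \<in> {B. B \<subseteq> U - D \<and> card B = m - card J}" using E by auto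
    qed
    show "(\<lambda>B. B \<union> J) ` {B. B \<subseteq> U - D \<and> card B = m - card J} \<subseteq> {E. E \<subseteq> U \<and> card E = m \<and> E \<inter> D = J}"
    proof safe
      fix B assume B: "B \<subseteq> U - D" "card B = m - card J"
      then have "finite B" using U finite_subset by blast
      moreover have "B \<inter> J = {}" using B J by auto
      ultimately show "card (B \<union> J) = m" using B j fJ by (simp add: card_Un_disjoint)
    qed (use D J in auto)
  qed
  then have "card {E. E \<subseteq> U \<and> card E = m \<and> E \<inter> D = J} = card {B. B \<subseteq> U - D \<and> card B = m - card J}"
    by (rule bij_betw_same_card)
  also have "\<dots> = card (U - D) choose (m - card J)" using U by (simp add: n_subsets)
  also have "card (U - D) = card U - card D" using D fD by (simp add: card_Diff_subset)
  finally show ?thesis .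
qed

lemma prob_exact_inter:
  assumes U: "finite U" and D: "D \<subseteq> U" and J: "J \<subseteq> D" and m: "m \<le> card U"
  shows "real (card {E. E \<subseteq> U \<and> card E = m \<and> E \<inter> D = J})
     \<le> (real m / real (card U))^(card J) * real (card {E. E \<subseteq> U \<and> card E = m})
        * ((real (card U) - real (card D)) / (real (card U) - real (card J)))^(m - card J)"
proof (cases "card J \<le> m")
  case False
  have emp: "{E. E \<subseteq> U \<and> card E = m \<and> E \<inter> D = J} = {}"
  proof (rule ccontr)
    assume "{E. E \<subseteq> U \<and> card E = m \<and> E \<inter> D = J} \<noteq> {}"
    then obtain E where E: "E \<subseteq> U" "card E = m" "E \<inter> D = J" by auto
    then have "finite E" using U finite_subset by blast
    then have "card J \<le> m" using E card_mono by blast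
    then show False using E False by auto
  qed
  have fD: "finite D" using U D finite_subset by blast
  have "card J \<le> card D" "card D \<le> card U" using J D fD U by (auto intro: card_mono)
  then show ?thesis unfolding emp by simp
next
  case True
  define N where "N = card U"
  define d where "d = card D"
  define j where "j = card J"
  have fD: "finite D" using U D finite_subset by blast
  have jd: "j \<le> d" unfolding j_def d_def using J fD by (simp add: card_mono)
  have dN: "d \<le> N" unfolding N_def d_def using D U by (simp add: card_mono)
  have jm: "j \<le> m" using True j_def by simp
  have cnt: "real (card {E. E \<subseteq> U \<and> card E = m \<and> E \<inter> D = J}) = real ((N - d) choose (m - j))"
    using card_exact_inter[OF U D J True] N_def d_def j_def by simp
  have G: "card {E. E \<subseteq> U \<and> card E = m} = N choose m" using U N_def by (simp add: n_subsets)
  show ?thesis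
  proof (cases "N - j = 0")
    case True
    then have "m = j" "d = N" using jm m jd dN N_def by auto
    then show ?thesis unfolding cnt G using N_def d_def j_def \<open>N - j = 0\<close> m
      by (simp add: field_simps)
  next
    case False
    have "real ((N - d) choose (m - j)) \<le> (real (N - d) / real (N - j))^(m - j) * real ((N - j) choose (m - j))"
      using False jd by (intro choose_ratio_top) auto
    also have "\<dots> \<le> (real (N - d) / real (N - j))^(m - j) * ((real m / real N)^j * real (N choose m))"
      using jm m N_def by (intro mult_left_mono choose_ratio_sub) auto
    finally show ?thesis unfolding cnt G using jd dN False
      by (simp add: N_def d_def j_def of_nat_diff algebra_simps)
  qed
qed

lemma indep_third:
  assumes "finite P" "inj g" "\<forall>x\<in>P. g x \<noteq> x"
  shows "\<exists>I \<subseteq> P. card P \<le> 3 * card I \<and> (\<forall>x\<in>I. g x \<notin> I)"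
  using assms
proof (induction "card P" arbitrary: P rule: less_induct)
  case less
  show ?case
  proof (cases "P = {}")
    case True then show ?thesis by auto
  next
    case False
    then obtain x where x: "x \<in> P" by auto
    define Q where "Q = P - {x, g x} - {y. g y = x}"
    have sub: "{y. g y = x} \<subseteq> {inv g x}" using less.prems(2) by (auto simp: inv_f_eq)
    then have c1: "card {y. g y = x} \<le> 1"
      using card_mono[OF _ sub] by simp
    have fQ: "finite Q" using less.prems Q_def by auto
    have "card P \<le> card Q + card ({x, g x} \<union> {y. g y = x})"
    proof -
      have "P \<subseteq> Q \<union> ({x, g x} \<union> {y. g y = x})" unfolding Q_def by auto
      then have "card P \<le> card (Q \<union> ({x, g x} \<union> {y. g y = x}))"
        using fQ sub finite_subset by (intro card_mono) auto
      also have "\<dots> \<le> card Q + card ({x, g x} \<union> {y. g y = x})" by (rule card_Un_le)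
      finally show ?thesis .
    qed
    also have "card ({x, g x} \<union> {y. g y = x}) \<le> card {x, g x} + card {y. g y = x}"
      by (rule card_Un_le)
    also have "card {x, g x} \<le> 2" by (simp add: card_insert_le_m1)
    finally have cP: "card P \<le> card Q + 3" using c1 by linarith
    have "card Q < card P" unfolding Q_def using x less.prems(1)
      by (intro psubset_card_mono) auto
    then obtain I where I: "I \<subseteq> Q" "card Q \<le> 3 * card I" "\<forall>z\<in>I. g z \<notin> I"
      using less.hyps[of Q] fQ less.prems Q_def by auto
    have xI: "x \<notin> I" using I Q_def by auto
    have fI: "finite I" using I fQ finite_subset by blast
    show ?thesis
    proof (intro exI[of _ "insert x I"] conjI)
      show "insert x I \<subseteq> P" using I x Q_def by auto
      show "card P \<le> 3 * card (insert x I)" using cP I xI fI by simp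
      show "\<forall>z\<in>insert x I. g z \<notin> insert x I"
        using I Q_def less.prems(3) x by auto
    qed
  qed
qed

definition DS :: "nat \<Rightarrow> nat set \<Rightarrow> nat set set" where
  "DS n S = {e \<in> all_edges n. e \<inter> S \<noteq> {}}"

lemma finite_all_edges: "finite (all_edges n)"
  unfolding all_edges_def by (rule finite_subset[of _ "Pow {0..<n}"]) auto

lemma card_all_edges: "card (all_edges n) = n choose 2"
  unfolding all_edges_def using n_subsets[of "{0..<n}" 2] by simp

lemma card_DS:
  assumes "S \<subseteq> {0..<n}"
  shows "card (DS n S) = (n choose 2) - ((n - card S) choose 2)"
proof -
  have "all_edges n - DS n S = {e. e \<subseteq> {0..<n} - S \<and> card e = 2}"
    unfolding DS_def all_edges_def by auto
  then have "card (all_edges n - DS n S) = (n - card S) choose 2"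
    using n_subsets[of "{0..<n} - S" 2] assms
    by (simp add: card_Diff_subset finite_subset)
  moreover have "DS n S \<subseteq> all_edges n" unfolding DS_def by auto
  moreover have fD: "finite (DS n S)" using finite_all_edges \<open>DS n S \<subseteq> all_edges n\<close> finite_subset by blast
  ultimately have "card (all_edges n) - card (DS n S) = (n - card S) choose 2"
    by (simp add: card_Diff_subset)
  moreover have "card (DS n S) \<le> card (all_edges n)"
    using \<open>DS n S \<subseteq> all_edges n\<close> finite_all_edges by (rule card_mono[rotated])
  ultimately show ?thesis using card_all_edges[of n] by arith
qed

lemma fixed_edges_bound:
  assumes "\<pi> permutes S" "\<forall>x\<in>S. \<pi> x \<noteq> x" "finite S"
  shows "card {e \<in> DS n S. \<pi> ` e = e} \<le> card S"
proof -
  have "{e \<in> DS n S. \<pi> ` e = e} \<subseteq> (\<lambda>u. {u, \<pi> u}) ` S"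
  proof
    fix e assume e: "e \<in> {e \<in> DS n S. \<pi> ` e = e}"
    then have "card e = 2" "e \<inter> S \<noteq> {}" "\<pi> ` e = e" unfolding DS_def all_edges_def by auto
    then obtain a b where ab: "e = {a, b}" "a \<noteq> b" by (auto simp: card_2_iff)
    from \<open>e \<inter> S \<noteq> {}\<close> obtain u where u: "u \<in> e" "u \<in> S" by auto
    have "\<pi> u \<in> e" using \<open>\<pi> ` e = e\<close> u by auto
    moreover have "\<pi> u \<noteq> u" using assms u by auto
    ultimately have "e = {u, \<pi> u}" using ab u by auto
    then show "e \<in> (\<lambda>u. {u, \<pi> u}) ` S" using u by auto
  qed
  then have "card {e \<in> DS n S. \<pi> ` e = e} \<le> card ((\<lambda>u. {u, \<pi> u}) ` S)"
    using assms(3) by (intro card_mono) auto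
  also have "\<dots> \<le> card S" using assms(3) by (rule card_image_le)
  finally show ?thesis .
qed

lemma real_card_UN_le:
  assumes "finite I"
  shows "real (card (\<Union>i\<in>I. A i)) \<le> (\<Sum>i\<in>I. real (card (A i)))"
proof -
  have "card (\<Union>i\<in>I. A i) \<le> (\<Sum>i\<in>I. card (A i))" using assms by (rule card_UN_le)
  then have "real (card (\<Union>i\<in>I. A i)) \<le> real (\<Sum>i\<in>I. card (A i))" by (rule of_nat_mono)
  then show ?thesis by simp
qed

lemma real_card_mono_le:
  assumes "finite B" "A \<subseteq> B" shows "real (card A) \<le> real (card B)"
  using card_mono[OF assms] by simp

lemma finite_subsets_P: "finite A \<Longrightarrow> finite {B. B \<subseteq> A \<and> P B}"
  by (rule finite_subset[of _ "Pow A"]) auto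

lemma finite_graphs: "finite {E. E \<subseteq> all_edges n \<and> P E}"
  using finite_all_edges by (rule finite_subsets_P)

lemma high_bound:
  assumes S: "S \<subseteq> {0..<n}" and perm: "\<pi> permutes S" and mv: "\<forall>x\<in>S. \<pi> x \<noteq> x"
    and m: "m \<le> card (all_edges n)"
  shows "real (card {E. E \<subseteq> all_edges n \<and> card E = m \<and> card {e\<in>E. \<pi> ` e \<notin> E} \<le> Xb
                   \<and> 3 * t + card S + Xb \<le> card (E \<inter> DS n S)})
    \<le> real (card (DS n S) choose t) * (real m / real (card (all_edges n)))^(2*t)
       * real (card {E. E \<subseteq> all_edges n \<and> card E = m})"
proof -
  define U where "U = all_edges n"
  define D where "D = DS n S"
  define g where "g = (\<lambda>e::nat set. \<pi> ` e)"
  define Idx where "Idx = {T. T \<subseteq> D \<and> card T = t \<and> T \<inter> g ` T = {}}"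
  define p where "p = real m / real (card U)"
  have fU: "finite U" unfolding U_def by (rule finite_all_edges)
  have DU: "D \<subseteq> U" unfolding D_def U_def DS_def by auto
  have fD: "finite D" using fU DU finite_subset by blast
  have fS: "finite S" using S finite_subset by blast
  have injg: "inj g" unfolding g_def using permutes_inj[OF perm]
    by (simp add: inj_on_def inj_image_eq_iff)
  have Gsub: "{E. E \<subseteq> U \<and> card E = m \<and> card {e\<in>E. \<pi> ` e \<notin> E} \<le> Xb
                   \<and> 3 * t + card S + Xb \<le> card (E \<inter> D)}
      \<subseteq> (\<Union>T\<in>Idx. {E. E \<subseteq> U \<and> card E = m \<and> T \<union> g ` T \<subseteq> E})"
  proof
    fix E assume "E \<in> {E. E \<subseteq> U \<and> card E = m \<and> card {e\<in>E. \<pi> ` e \<notin> E} \<le> Xb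
                   \<and> 3 * t + card S + Xb \<le> card (E \<inter> D)}"
    then have E: "E \<subseteq> U" "card E = m" "card {e\<in>E. \<pi> ` e \<notin> E} \<le> Xb"
       "3 * t + card S + Xb \<le> card (E \<inter> D)" by auto
    have fE: "finite E" using E fU finite_subset by blast
    define P where "P = {e \<in> E \<inter> D. g e \<in> E \<and> g e \<noteq> e}"
    have fP: "finite P" unfolding P_def using fE by auto
    have "E \<inter> D \<subseteq> P \<union> {e\<in>E. \<pi> ` e \<notin> E} \<union> {e \<in> DS n S. \<pi> ` e = e}"
      unfolding P_def g_def D_def by auto
    then have "card (E \<inter> D) \<le> card (P \<union> {e\<in>E. \<pi> ` e \<notin> E} \<union> {e \<in> DS n S. \<pi> ` e = e})"
      using fP fE fD D_def by (intro card_mono) auto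
    also have "\<dots> \<le> card P + card {e\<in>E. \<pi> ` e \<notin> E} + card {e \<in> DS n S. \<pi> ` e = e}"
      by (meson add_mono card_Un_le le_refl order_trans)
    also have "\<dots> \<le> card P + Xb + card S"
      using E(3) fixed_edges_bound[OF perm mv fS, of n] by linarith
    finally have cP: "3 * t \<le> card P" using E(4) by linarith
    obtain I where I: "I \<subseteq> P" "card P \<le> 3 * card I" "\<forall>x\<in>I. g x \<notin> I"
      using indep_third[OF fP injg] P_def by auto
    have "t \<le> card I" using cP I by linarith
    then obtain T where T: "T \<subseteq> I" "card T = t" by (meson obtain_subset_with_card_n)
    have "T \<in> Idx" unfolding Idx_def using T I P_def by auto
    moreover have "T \<union> g ` T \<subseteq> E" using T I P_def by auto
    ultimately show "E \<in> (\<Union>T\<in>Idx. {E. E \<subseteq> U \<and> card E = m \<and> T \<union> g ` T \<subseteq> E})"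
      using E by auto
  qed
  have fIdx: "finite Idx" unfolding Idx_def using fD
    by (simp add: finite_subsets_P)
  have "real (card {E. E \<subseteq> U \<and> card E = m \<and> card {e\<in>E. \<pi> ` e \<notin> E} \<le> Xb
                   \<and> 3 * t + card S + Xb \<le> card (E \<inter> D)})
     \<le> real (card (\<Union>T\<in>Idx. {E. E \<subseteq> U \<and> card E = m \<and> T \<union> g ` T \<subseteq> E}))"
    using Gsub fIdx fU finite_graphs[of n] U_def
    by (intro real_card_mono_le) (auto intro: finite_subset[of _ "{E. E \<subseteq> U}"])
  also have "\<dots> \<le> (\<Sum>T\<in>Idx. real (card {E. E \<subseteq> U \<and> card E = m \<and> T \<union> g ` T \<subseteq> E}))"
    using fIdx by (rule real_card_UN_le)
  also have "\<dots> \<le> (\<Sum>T\<in>Idx. p^(2*t) * real (card {E. E \<subseteq> U \<and> card E = m}))"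
  proof (rule sum_mono)
    fix T assume "T \<in> Idx"
    then have T: "T \<subseteq> D" "card T = t" "T \<inter> g ` T = {}" unfolding Idx_def by auto
    have fT: "finite T" using T fD finite_subset by blast
    have "card (T \<union> g ` T) = 2 * t"
      using T fT card_image[OF inj_on_subset[OF injg]] by (simp add: card_Un_disjoint)
    then show "real (card {E. E \<subseteq> U \<and> card E = m \<and> T \<union> g ` T \<subseteq> E}) \<le> p^(2*t) * real (card {E. E \<subseteq> U \<and> card E = m})"
      using prob_supset[OF fU, of m "T \<union> g ` T"] m fT U_def p_def by simp
  qed
  also have "\<dots> = real (card Idx) * p^(2*t) * real (card {E. E \<subseteq> U \<and> card E = m})" by simp
  also have "\<dots> \<le> real (card D choose t) * p^(2*t) * real (card {E. E \<subseteq> U \<and> card E = m})"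
  proof -
    have "card Idx \<le> card {T. T \<subseteq> D \<and> card T = t}"
      unfolding Idx_def using fD by (intro card_mono) (auto intro: finite_subset[of _ "Pow D"])
    then have "real (card Idx) \<le> real (card D choose t)" using fD by (simp add: n_subsets)
    then show ?thesis by (intro mult_right_mono) (auto simp: p_def)
  qed
  finally show ?thesis unfolding U_def D_def p_def .
qed

lemma low_bound:
  assumes DU: "D \<subseteq> all_edges n" and m: "m \<le> card (all_edges n)"
  shows "real (card {E. E \<subseteq> all_edges n \<and> card E = m \<and> card (E \<inter> D) < L})
    \<le> (\<Sum>j<L. real (card D choose j) * (real m / real (card (all_edges n)))^j
        * real (card {E. E \<subseteq> all_edges n \<and> card E = m})
        * ((real (card (all_edges n)) - real (card D)) / (real (card (all_edges n)) - real j))^(m - j))"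
proof -
  define U where "U = all_edges n"
  have fU: "finite U" unfolding U_def by (rule finite_all_edges)
  have fD: "finite D" using fU DU finite_subset U_def by blast
  define Sub where "Sub = (\<lambda>j. {J. J \<subseteq> D \<and> card J = j})"
  have fSub: "finite (Sub j)" for j unfolding Sub_def using fD
    by (simp add: finite_subsets_P)
  have sub: "{E. E \<subseteq> U \<and> card E = m \<and> card (E \<inter> D) < L}
     \<subseteq> (\<Union>j\<in>{..<L}. \<Union>J\<in>Sub j. {E. E \<subseteq> U \<and> card E = m \<and> E \<inter> D = J})"
    unfolding Sub_def by auto
  have "real (card {E. E \<subseteq> U \<and> card E = m \<and> card (E \<inter> D) < L})
     \<le> real (card (\<Union>j\<in>{..<L}. \<Union>J\<in>Sub j. {E. E \<subseteq> U \<and> card E = m \<and> E \<inter> D = J}))"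
    using sub U_def by (intro real_card_mono_le) (auto intro: finite_subset[OF _ finite_graphs[of n "\<lambda>_. True"]])
  also have "\<dots> \<le> (\<Sum>j<L. real (card (\<Union>J\<in>Sub j. {E. E \<subseteq> U \<and> card E = m \<and> E \<inter> D = J})))"
    by (rule real_card_UN_le) simp
  also have "\<dots> \<le> (\<Sum>j<L. \<Sum>J\<in>Sub j. real (card {E. E \<subseteq> U \<and> card E = m \<and> E \<inter> D = J}))"
    by (intro sum_mono real_card_UN_le fSub)
  also have "\<dots> \<le> (\<Sum>j<L. \<Sum>J\<in>Sub j. (real m / real (card U))^j * real (card {E. E \<subseteq> U \<and> card E = m})
        * ((real (card U) - real (card D)) / (real (card U) - real j))^(m - j))"
  proof (intro sum_mono)
    fix j J assume "J \<in> Sub j"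
    then have J: "J \<subseteq> D" "card J = j" unfolding Sub_def by auto
    show "real (card {E. E \<subseteq> U \<and> card E = m \<and> E \<inter> D = J}) \<le> (real m / real (card U))^j * real (card {E. E \<subseteq> U \<and> card E = m})
        * ((real (card U) - real (card D)) / (real (card U) - real j))^(m - j)"
      using prob_exact_inter[OF fU _ J(1), of m] DU J m U_def by simp
  qed
  also have "\<dots> = (\<Sum>j<L. real (card D choose j) * (real m / real (card U))^j * real (card {E. E \<subseteq> U \<and> card E = m})
        * ((real (card U) - real (card D)) / (real (card U) - real j))^(m - j))"
    using fD by (simp add: Sub_def n_subsets mult.assoc)
  finally show ?thesis unfolding U_def .
qed

lemma exp_partial:
  fixes x :: real assumes "0 \<le> x"
  shows "(\<Sum>j<K. x^j / fact j) \<le> exp x"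
proof -
  have s: "(\<lambda>j. x^j / fact j) sums exp x"
    using exp_converges[of x] by (simp add: divide_inverse mult.commute scaleR_conv_of_real)
  show ?thesis
    by (rule sum_le_suminf[OF sums_summable[OF s], of "{..<K}", unfolded sums_unique[OF s, symmetric]])
       (use assms in auto)
qed

lemma pow_le_exp_fact: "real t ^ t \<le> exp (real t) * fact t"
proof -
  have "real t ^ t / fact t \<le> (\<Sum>j<Suc t. real t ^ j / fact j)"
    by (rule member_le_sum) auto
  also have "\<dots> \<le> exp (real t)" by (rule exp_partial) simp
  finally show ?thesis by (simp add: divide_le_eq)
qed

lemma binom_le_pow_fact: "real (d choose j) \<le> real d ^ j / fact j"
proof -
  have "real ((d choose j) * fact j) \<le> real (d ^ j)"
    using binomial_fact_pow[of d j] by (simp only: of_nat_le_iff)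
  then show ?thesis by (simp add: field_simps)
qed

lemma binom_le_pow: "real (n choose k) * fact k \<le> real n ^ k"
proof -
  have "real ((n choose k) * fact k) \<le> real (n ^ k)"
    using binomial_fact_pow[of n k] by (simp only: of_nat_le_iff)
  then show ?thesis by simp
qed

lemma binom_le_e:
  assumes "0 < k"
  shows "real (n choose k) \<le> (exp 1 * real n / real k)^k"
proof -
  have "real (n choose k) \<le> real n ^ k / fact k" by (rule binom_le_pow_fact)
  also have "\<dots> \<le> real n ^ k * exp (real k) / real k ^ k"
  proof -
    have "real k ^ k \<le> exp (real k) * fact k" by (rule pow_le_exp_fact)
    then have "real k ^ k * real n ^ k \<le> (exp (real k) * fact k) * real n ^ k"
      by (intro mult_right_mono) auto
    then show ?thesis using assms by (simp add: field_simps)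
  qed
  also have "\<dots> = (exp 1 * real n / real k)^k"
    by (simp add: power_divide power_mult_distrib exp_of_nat_mult[symmetric])
  finally show ?thesis .
qed

lemma real_choose2: "real (n choose 2) = real n * (real n - 1) / 2"
proof -
  have "even (n * (n - 1))" by (cases "even n") auto
  then have "real (n * (n - 1) div 2) = real (n * (n - 1)) / 2"
    by (simp add: real_of_nat_div)
  then show ?thesis by (cases n) (auto simp: choose_two algebra_simps)
qed

lemma exp_5_4: "120 \<le> exp (5.4::real)"
proof -
  have "(\<Sum>j<7. (5.4::real)^j / fact j) \<le> exp 5.4" by (rule exp_partial) simp
  moreover have "(\<Sum>j<7. (5.4::real)^j / fact j) \<ge> 120"
    by (simp add: numeral_eq_Suc fact_numeral)
  ultimately show ?thesis by linarith
qed

lemma one_minus_le_exp: "1 - (x::real) \<le> exp (-x)"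
  using exp_ge_add_one_self[of "-x"] by simp

lemma lowT_term:
  fixes N d m j :: nat
  assumes N: "0 < N" "d \<le> N" "m \<le> N" and p: "p = real m / real N" and mu: "\<mu> = p * real d"
    and j: "real j < \<mu>"
  shows "real (d choose j) * p^j * ((real N - real d)/(real N - real j))^(m - j)
     \<le> exp (-\<mu>) * (exp 2 * \<mu>)^j / fact j"
proof -
  have p0: "0 \<le> p" "p \<le> 1" using N p by auto
  have mud: "\<mu> \<le> real d" using p0 mu by (simp add: mult_left_le_one_le)
  have mum: "\<mu> \<le> real m"
  proof -
    have "\<mu> = real m * (real d / real N)" using mu p by simp
    moreover have "real d / real N \<le> 1" using N by simp
    ultimately show ?thesis using mult_left_le[of "real d / real N" "real m"] by simp
  qed
  have jd: "j < d" "j < m" using j mud mum by auto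
  have jN: "j < N" using jd N by auto
  have c1: "real (d choose j) * p^j \<le> \<mu>^j / fact j"
  proof -
    have "real (d choose j) * p^j \<le> (real d ^ j / fact j) * p^j"
      using p0 by (intro mult_right_mono binom_le_pow_fact) auto
    also have "\<dots> = \<mu>^j / fact j" using mu by (simp add: power_mult_distrib field_simps)
    finally show ?thesis .
  qed
  define b where "b = (real N - real d)/(real N - real j)"
  have b0: "0 \<le> b" using N jN b_def by auto
  have "b = 1 - (real d - real j) / (real N - real j)" using jN by (simp add: b_def field_simps)
  then have "b \<le> exp (- ((real d - real j) / (real N - real j)))" using one_minus_le_exp by simp
  then have "b^(m-j) \<le> exp (- ((real d - real j) / (real N - real j)))^(m-j)"
    using b0 by (intro power_mono) auto
  also have "\<dots> = exp (- ((real d - real j) * real (m - j) / (real N - real j)))"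
    by (simp add: exp_of_nat_mult[symmetric] field_simps)
  also have "\<dots> \<le> exp (2 * real j - \<mu>)"
  proof -
    have "(real d - real j) * real (m - j) / real N \<le> (real d - real j) * real (m - j) / (real N - real j)"
      using jd jN by (intro divide_left_mono) auto
    moreover have "\<mu> - 2 * real j \<le> (real d - real j) * real (m - j) / real N"
    proof -
      have h1: "real j * real d \<le> real j * real N" "real j * real m \<le> real j * real N"
        using N by (intro mult_left_mono; simp)+
      have h2: "0 \<le> real j * real j" by simp
      have e1: "(real d - real j) * (real m - real j) = real d * real m - real j * real d - real j * real m + real j * real j"
        by (simp add: algebra_simps)
      have e2: "2 * real j * real N = real j * real N + real j * real N" by simp
      have "real d * real m - 2 * real j * real N \<le> (real d - real j) * (real m - real j)"
        unfolding e1 e2 using h1 h2 by linarith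
      then show ?thesis using N jd mu p by (simp add: field_simps of_nat_diff)
    qed
    ultimately show ?thesis by simp
  qed
  finally have c2: "b^(m-j) \<le> exp (2 * real j - \<mu>)" .
  have "real (d choose j) * p^j * b^(m - j) \<le> (\<mu>^j / fact j) * exp (2 * real j - \<mu>)"
    using c1 c2 b0 p0 mu by (intro mult_mono) auto
  also have "\<dots> = exp (-\<mu>) * (exp 2 * \<mu>)^j / fact j"
    by (simp add: power_mult_distrib exp_of_nat_mult[symmetric] exp_add[symmetric] exp_diff field_simps)
  finally show ?thesis unfolding b_def .
qed

lemma lowT:
  fixes N d m :: nat
  assumes N: "0 < N" "d \<le> N" "m \<le> N" and p: "p = real m / real N" and mu: "\<mu> = p * real d"
    and mu0: "0 < \<mu>"
  shows "(\<Sum>j<nat \<lceil>\<mu>/120\<rceil>. real (d choose j) * p^j * ((real N - real d)/(real N - real j))^(m - j))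
     \<le> exp (-(93/100) * \<mu>)"
proof -
  define \<Lambda> where "\<Lambda> = \<mu>/120"
  define a where "a = 120 * exp (2::real)"
  have a1: "1 \<le> a" unfolding a_def using exp_ge_add_one_self[of 2] by simp
  have jL: "real j < \<Lambda>" if "j < nat \<lceil>\<mu>/120\<rceil>" for j
    using that unfolding \<Lambda>_def by linarith
  have "(\<Sum>j<nat \<lceil>\<mu>/120\<rceil>. real (d choose j) * p^j * ((real N - real d)/(real N - real j))^(m - j))
      \<le> (\<Sum>j<nat \<lceil>\<mu>/120\<rceil>. exp (-\<mu>) * (a powr \<Lambda>) * (\<Lambda>^j / fact j))"
  proof (rule sum_mono)
    fix j assume "j \<in> {..<nat \<lceil>\<mu>/120\<rceil>}"
    then have jl: "real j < \<Lambda>" using jL by auto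
    have L0: "0 \<le> \<Lambda>" using mu0 \<Lambda>_def by simp
    have jmu: "real j < \<mu>" using jl mu0 \<Lambda>_def by simp
    have t1: "real (d choose j) * p^j * ((real N - real d)/(real N - real j))^(m - j)
       \<le> exp (-\<mu>) * (exp 2 * \<mu>)^j / fact j"
      by (rule lowT_term[OF N p mu jmu])
    have aL: "exp 2 * \<mu> = a * \<Lambda>" unfolding a_def \<Lambda>_def by simp
    have t2: "(exp 2 * \<mu>)^j = a^j * \<Lambda>^j"
      unfolding aL by (rule power_mult_distrib)
    have t3: "a^j \<le> a powr \<Lambda>"
      using a1 jl by (simp add: powr_realpow[symmetric] powr_mono)
    have t4: "exp (-\<mu>) * (a^j * \<Lambda>^j) / fact j \<le> exp (-\<mu>) * (a powr \<Lambda> * \<Lambda>^j) / fact j"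
      using t3 L0 by (intro divide_right_mono mult_left_mono mult_right_mono) auto
    have "real (d choose j) * p^j * ((real N - real d)/(real N - real j))^(m - j)
       \<le> exp (-\<mu>) * (a^j * \<Lambda>^j) / fact j" using t1 unfolding t2 .
    also note t4
    also have "exp (-\<mu>) * (a powr \<Lambda> * \<Lambda>^j) / fact j = exp (-\<mu>) * (a powr \<Lambda>) * (\<Lambda>^j / fact j)"
      by simp
    finally show "real (d choose j) * p^j * ((real N - real d)/(real N - real j))^(m - j)
       \<le> exp (-\<mu>) * (a powr \<Lambda>) * (\<Lambda>^j / fact j)" .
  qed
  also have "\<dots> = exp (-\<mu>) * (a powr \<Lambda>) * (\<Sum>j<nat \<lceil>\<mu>/120\<rceil>. \<Lambda>^j / fact j)"
    by (simp add: sum_distrib_left)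
  also have "\<dots> \<le> exp (-\<mu>) * (a powr \<Lambda>) * exp \<Lambda>"
    using mu0 \<Lambda>_def by (intro mult_left_mono exp_partial) auto
  also have "\<dots> = exp (-\<mu> + \<Lambda> * ln a + \<Lambda>)"
    using a1 by (simp add: powr_def exp_add[symmetric] mult.commute)
  also have "\<dots> \<le> exp (-(93/100) * \<mu>)"
  proof -
    have "ln a = ln 120 + 2" unfolding a_def by (simp add: ln_mult)
    moreover have "ln (120::real) \<le> 5.4"
      using exp_5_4 by (metis ln_exp ln_le_cancel_iff exp_gt_zero zero_less_numeral)
    ultimately have "ln a \<le> 7.4" by simp
    then have "\<Lambda> * ln a \<le> \<Lambda> * 7.4" using mu0 \<Lambda>_def by (intro mult_left_mono) auto
    then have "-\<mu> + \<Lambda> * ln a + \<Lambda> \<le> -(93/100) * \<mu>" using \<Lambda>_def by linarith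
    then show ?thesis by simp
  qed
  finally show ?thesis .
qed

lemma highT:
  assumes "0 < t"
  shows "real (d choose t) * p^(2*t) \<le> (exp 1 * real d * p^2 / real t)^t"
proof -
  have "real (d choose t) \<le> real d ^ t / fact t" by (rule binom_le_pow_fact)
  also have "\<dots> \<le> real d ^ t * exp (real t) / real t ^ t"
  proof -
    have "real t ^ t \<le> exp (real t) * fact t" by (rule pow_le_exp_fact)
    then have "real t ^ t * real d ^ t \<le> (exp (real t) * fact t) * real d ^ t"
      by (intro mult_right_mono) auto
    then show ?thesis using assms by (simp add: field_simps)
  qed
  finally have "real (d choose t) * p^(2*t) \<le> (real d ^ t * exp (real t) / real t ^ t) * p^(2*t)"
    by (intro mult_right_mono) auto
  also have "\<dots> = (exp 1 * real d * p^2 / real t)^t"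
    by (simp add: power_divide power_mult_distrib exp_of_nat_mult[symmetric] power_mult)
  finally show ?thesis .
qed

lemma ln_20000: "ln (20000::real) \<le> 15"
proof -
  have "(2::real)^15 \<le> exp 1 ^ 15"
    using exp_ge_add_one_self[of 1] by (intro power_mono) auto
  then have "(20000::real) \<le> exp 15" by (simp add: exp_of_nat_mult[symmetric])
  then show ?thesis by (metis ln_exp ln_le_cancel_iff exp_gt_zero zero_less_numeral)
qed

lemma ln_10: "ln (10::real) \<le> 10"
  using ln_le_minus_one[of 10] by simp

lemma boundB:
  fixes n k :: nat and c :: real
  assumes H1: "7000 \<le> ln (real n)" and H2: "10 * ln (real n) \<le> sqrt (real n) / 900"
    and c: "10^4 \<le> c" "c \<le> real n / 10^10" and k: "2 \<le> k" "exp (-c/6) * real n \<le> real k"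
  shows "real n ^ k * (20000*c/real n) powr (c*real k/900) \<le> real n powr (-17)"
proof -
  define L where "L = ln (real n)"
  define x where "x = 20000*c/real n"
  have n0: "0 < real n" using H1 by (cases n) auto
  have x0: "0 < x" unfolding x_def using n0 c by simp
  have k0: "0 < real k" using k by simp
  have e1: "real n ^ k = exp (real k * L)" unfolding L_def using n0 by (simp add: exp_of_nat_mult)
  have e2: "x powr (c*real k/900) = exp (c*real k/900 * ln x)" using x0 by (simp add: powr_def)
  have e3: "real n powr (-17) = exp (-17 * L)" unfolding L_def using n0 by (simp add: powr_def)
  have ineq: "real k * L + c*real k/900 * ln x \<le> -17 * L"
  proof (cases "c \<le> sqrt (real n)")
    case True
    have "ln x = ln 20000 + ln c - L" unfolding x_def L_def using n0 c
      by (simp add: ln_div ln_mult)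
    moreover have "ln c \<le> L / 2"
    proof -
      have "ln c \<le> ln (sqrt (real n))" using True c by simp
      then show ?thesis unfolding L_def using n0 by (simp add: ln_sqrt)
    qed
    ultimately have lx: "ln x \<le> - L / 4" using ln_20000 H1 L_def by linarith
    have ckp: "0 \<le> c*real k/900" using c k by simp
    have "c*real k/900 * ln x \<le> c*real k/900 * (-L/4)" using lx ckp by (rule mult_left_mono)
    then have t: "real k * L + c*real k/900 * ln x \<le> real k * L * (1 - c/3600)"
      by (simp add: algebra_simps)
    have L0: "0 \<le> L" using H1 L_def by simp
    show ?thesis
    proof (cases "10 \<le> k")
      case True
      have neg: "1 - c/3600 \<le> 0" using c by simp
      have "real k * L * (1 - c/3600) \<le> 10 * L * (1 - c/3600)"
      proof -
        have "10 * L \<le> real k * L" using True L0 by (intro mult_right_mono) auto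
        then show ?thesis using neg by (rule mult_right_mono_neg)
      qed
      also have "\<dots> \<le> 10 * L * (1 - 10^4/3600)"
        using L0 c by (intro mult_left_mono) auto
      also have "\<dots> \<le> -17 * L" using L0 by simp
      finally show ?thesis using t by linarith
    next
      case False
      have "exp (-c/6) * real n < 10" using k False by simp
      then have "ln (exp (-c/6) * real n) < ln 10" using n0 by (simp del: ln_mult)
      then have "-c/6 + L < ln 10" unfolding L_def using n0 by (simp add: ln_mult)
      then have cL: "6 * L - 60 < c" using ln_10 by linarith
      have neg: "1 - c/3600 \<le> -9" using cL H1 L_def by linarith
      have "real k * L * (1 - c/3600) \<le> 2 * L * (1 - c/3600)"
      proof -
        have kk: "2 * L \<le> real k * L" using k L0 by (intro mult_right_mono) auto
        show ?thesis using mult_right_mono_neg[OF kk, of "1 - c/3600"] neg by linarith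
      qed
      also have "\<dots> \<le> 2 * L * (-9)" using L0 neg by (intro mult_left_mono) auto
      also have "\<dots> \<le> -17 * L" using L0 by simp
      finally show ?thesis using t by linarith
    qed
  next
    case False
    have "x \<le> 20000 / 10^10" unfolding x_def using c n0 by (simp add: field_simps)
    also have "\<dots> \<le> exp (-1)"
    proof -
      have "exp 1 \<le> (3::real)" by (rule exp_le)
      then have "(20000 / 10^10) * exp 1 \<le> (1::real)" by simp
      then show ?thesis by (simp add: exp_minus field_simps)
    qed
    finally have lx: "ln x \<le> -1" using x0 by (metis ln_exp ln_le_cancel_iff exp_gt_zero)
    have ckp: "0 \<le> c*real k/900" using c k by simp
    have "c*real k/900 * ln x \<le> c*real k/900 * (-1)" using lx ckp by (rule mult_left_mono)
    moreover have "sqrt (real n) * real k \<le> c * real k" using False k0 by (intro mult_right_mono) auto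
    ultimately have t: "real k * L + c*real k/900 * ln x \<le> real k * (L - sqrt (real n)/900)"
      by (simp add: algebra_simps)
    have neg: "L - sqrt (real n)/900 \<le> -9 * L" using H2 L_def by linarith
    have L0: "0 \<le> L" using H1 L_def by simp
    have "real k * (L - sqrt (real n)/900) \<le> real k * (-9 * L)" using neg k0 by (intro mult_left_mono) auto
    also have "\<dots> \<le> 2 * (-9 * L)" using k L0 by (intro mult_right_mono_neg) auto
    finally show ?thesis using t L0 by linarith
  qed
  have "real n ^ k * x powr (c*real k/900) = exp (real k * L + c*real k/900 * ln x)"
    unfolding e1 e2 by (simp add: exp_add)
  also have "\<dots> \<le> exp (-17 * L)" using ineq by simp
  finally show ?thesis unfolding e3 x_def .
qed

lemma boundA:
  fixes n k :: nat and c \<mu> :: real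
  assumes H1: "7000 \<le> ln (real n)" and H3: "17 * ln (real n) \<le> 5000 * real n powr (1/30)"
    and c: "10^4 \<le> c" and k: "2 \<le> k" "k \<le> n" "exp (-c/6) * real n \<le> real k"
    and mu1: "c * real k \<le> \<mu>" and mu2: "real k \<le> real n / 20 \<Longrightarrow> 1.95 * c * real k \<le> \<mu>"
  shows "real (n choose k) * exp (-(93/100) * \<mu>) \<le> real n powr (-17)"
proof -
  define L where "L = ln (real n)"
  have n0: "0 < real n" using H1 by (cases n) auto
  have k0: "0 < real k" using k by simp
  have L0: "0 \<le> L" using H1 L_def by simp
  have e3: "real n powr (-17) = exp (-17 * L)" unfolding L_def using n0 by (simp add: powr_def)
  have nbig: "100 \<le> real n"
  proof -
    have "1 + L \<le> exp L" by (rule exp_ge_add_one_self)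
    then show ?thesis using n0 L_def H1 by simp
  qed
  obtain B where B: "real (n choose k) \<le> exp B" and Bb: "B - (93/100) * \<mu> \<le> -17 * L"
  proof (cases "5.8 * L \<le> c")
    case True
    have "real (n choose k) \<le> real n ^ k" using binomial_le_pow[OF k(2)] by (simp only: of_nat_le_iff of_nat_power[symmetric])
    also have "\<dots> = exp (real k * L)" unfolding L_def using n0 by (simp add: exp_of_nat_mult)
    finally have B1: "real (n choose k) \<le> exp (real k * L)" .
    have ckL: "5.8 * L * real k \<le> c * real k" using True k0 by (intro mult_right_mono) auto
    have ck0: "0 \<le> c * real k" using c k0 by simp
    show ?thesis
    proof (cases "real k \<le> real n / 20")
      case True
      have "real k * L - (93/100) * \<mu> \<le> real k * L - (93/100) * (1.95 * c * real k)"
        using mu2[OF True] by simp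
      also have "\<dots> \<le> -9 * (real k * L)" using ckL ck0 by (simp add: algebra_simps)
      also have "\<dots> \<le> -17 * L"
      proof -
        have "2 * L \<le> real k * L" using k L0 by (intro mult_right_mono) auto
        then show ?thesis using L0 by linarith
      qed
      finally show ?thesis using that B1 by blast
    next
      case False
      have "real k * L - (93/100) * \<mu> \<le> real k * L - (93/100) * (c * real k)"
        using mu1 by simp
      also have "\<dots> \<le> -4 * (real k * L)" using ckL ck0 by (simp add: algebra_simps)
      also have "\<dots> \<le> -4 * ((real n / 20) * L)"
        using False L0 by (intro mult_left_mono_neg mult_right_mono) auto
      also have "\<dots> \<le> -17 * L"
      proof -
        have "100 * L \<le> real n * L" using nbig L0 by (intro mult_right_mono) auto
        then show ?thesis using L0 by linarith
      qed
      finally show ?thesis using that B1 by blast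
    qed
  next
    case False
    have "real (n choose k) \<le> (exp 1 * real n / real k)^k" using k by (intro binom_le_e) auto
    also have "\<dots> \<le> (exp 1 * exp (c/6))^k"
    proof -
      have "real n / real k \<le> exp (c/6)"
        using k(3) k0 by (simp add: field_simps exp_minus)
      then have "exp 1 * real n / real k \<le> exp 1 * exp (c/6)"
        by (simp add: mult_left_mono times_divide_eq_right[symmetric] del: times_divide_eq_right)
      then show ?thesis using n0 k0 by (intro power_mono) auto
    qed
    also have "\<dots> = exp (real k * (1 + c/6))" by (simp add: exp_add[symmetric] exp_of_nat_mult[symmetric])
    finally have B1: "real (n choose k) \<le> exp (real k * (1 + c/6))" .
    have kbig: "real n powr (1/30) \<le> real k"
    proof -
      have "exp (-(29/30) * L) \<le> exp (-c/6)" using False by simp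
      then have "exp (-(29/30) * L) * real n \<le> exp (-c/6) * real n" using n0 by simp
      moreover have "exp (-(29/30) * L) * real n = real n powr (1/30)"
      proof -
        have "exp (-(29/30) * L) * real n = exp (-(29/30) * L) * exp L" using n0 L_def by simp
        also have "\<dots> = exp (-(29/30) * L + L)" by (rule exp_add[symmetric])
        also have "-(29/30) * L + L = (1/30) * L" by simp
        also have "exp ((1/30) * L) = real n powr (1/30)" unfolding L_def powr_def using n0 by simp
        finally show ?thesis .
      qed
      ultimately show ?thesis using k(3) by simp
    qed
    have "real k * (1 + c/6) - (93/100) * \<mu> \<le> real k * (1 + c/6) - (93/100) * (c * real k)"
      using mu1 by simp
    also have "\<dots> = real k * (1 + c/6 - (93/100) * c)" by (simp add: algebra_simps)
    also have "\<dots> \<le> real k * (-5000)" using c k0 by (intro mult_left_mono) auto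
    also have "\<dots> \<le> real n powr (1/30) * (-5000)" using kbig by simp
    also have "\<dots> \<le> -17 * L" using H3 L_def by simp
    finally show ?thesis using that B1 by blast
  qed
  have "real (n choose k) * exp (-(93/100) * \<mu>) \<le> exp B * exp (-(93/100) * \<mu>)"
    using B by (intro mult_right_mono) auto
  also have "\<dots> = exp (B - (93/100) * \<mu>)" by (simp add: exp_add[symmetric])
  also have "\<dots> \<le> exp (-17 * L)" using Bb by simp
  finally show ?thesis unfolding e3 .
qed

lemma bad_S_bound:
  fixes n m :: nat and c \<mu> p :: real and t :: nat and S :: "nat set"
  assumes S: "S \<subseteq> {0..<n}" "2 \<le> card S"
    and m: "m \<le> card (all_edges n)" and c: "10^4 \<le> c"
    and N0: "0 < card (all_edges n)"
    and p: "p = real m / real (card (all_edges n))"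
    and mu: "\<mu> = p * real (card (DS n S))" and mu1: "c * real (card S) \<le> \<mu>"
    and t: "t = nat \<lceil>c * real (card S) / 900\<rceil>"
  shows "real (card {E. E \<subseteq> all_edges n \<and> card E = m \<and> (\<exists>\<pi>. \<pi> permutes S \<and> (\<forall>x\<in>S. \<pi> x \<noteq> x)
            \<and> real (card {e\<in>E. \<pi> ` e \<notin> E}) \<le> c * real (card S) / 240)})
     \<le> (exp (-(93/100)*\<mu>) + fact (card S) * (exp 1 * real (card (DS n S)) * p^2 / real t)^t)
        * real (card {E. E \<subseteq> all_edges n \<and> card E = m})"
proof -
  define U where "U = all_edges n"
  define D where "D = DS n S"
  define k where "k = card S"
  define G where "G = {E. E \<subseteq> U \<and> card E = m}"
  define Lnat where "Lnat = nat \<lceil>\<mu>/120\<rceil>"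
  define Xb where "Xb = nat \<lfloor>c * real k / 240\<rfloor>"
  define Perms where "Perms = {\<pi>. \<pi> permutes S \<and> (\<forall>x\<in>S. \<pi> x \<noteq> x)}"
  have fU: "finite U" unfolding U_def by (rule finite_all_edges)
  have DU: "D \<subseteq> U" unfolding D_def U_def DS_def by auto
  have fS: "finite S" using S finite_subset by blast
  have k2: "2 \<le> k" using S k_def by simp
  have ck0: "0 < c * real k" using c k2 by simp
  have mu0: "0 < \<mu>" using mu1 ck0 k_def by simp
  have key: "3 * t + k + Xb \<le> Lnat"
  proof -
    have "real t \<le> c * real k / 900 + 1" unfolding t k_def
      using ck0 k_def of_int_ceiling_le_add_one[of "c * real (card S) / 900"] by simp
    moreover have "real Xb \<le> c * real k / 240" unfolding Xb_def
      using ck0 of_int_floor_le[of "c * real k / 240"] by (simp del: of_int_floor_le)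
    moreover have "\<mu>/120 \<le> real Lnat" unfolding Lnat_def by (rule real_nat_ceiling_ge)
    moreover have "real k + 3 \<le> c * real k / 1200"
    proof -
      have "10000 * real k \<le> c * real k" using c k2 by (intro mult_right_mono) auto
      moreover have "2 \<le> real k" using k2 by simp
      ultimately show ?thesis by linarith
    qed
    ultimately have "real (3 * t + k + Xb) \<le> real Lnat" using mu1 k_def by simp
    then show ?thesis by (simp only: of_nat_le_iff)
  qed
  have sub: "{E. E \<subseteq> U \<and> card E = m \<and> (\<exists>\<pi>. \<pi> permutes S \<and> (\<forall>x\<in>S. \<pi> x \<noteq> x)
            \<and> real (card {e\<in>E. \<pi> ` e \<notin> E}) \<le> c * real k / 240)}
     \<subseteq> {E. E \<subseteq> U \<and> card E = m \<and> card (E \<inter> D) < Lnat}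
        \<union> (\<Union>\<pi>\<in>Perms. {E. E \<subseteq> U \<and> card E = m \<and> card {e\<in>E. \<pi> ` e \<notin> E} \<le> Xb
                   \<and> 3 * t + card S + Xb \<le> card (E \<inter> D)})"
  proof
    fix E assume "E \<in> {E. E \<subseteq> U \<and> card E = m \<and> (\<exists>\<pi>. \<pi> permutes S \<and> (\<forall>x\<in>S. \<pi> x \<noteq> x)
            \<and> real (card {e\<in>E. \<pi> ` e \<notin> E}) \<le> c * real k / 240)}"
    then obtain \<pi> where E: "E \<subseteq> U" "card E = m" "\<pi> \<in> Perms"
       "real (card {e\<in>E. \<pi> ` e \<notin> E}) \<le> c * real k / 240" unfolding Perms_def by auto
    have "card {e\<in>E. \<pi> ` e \<notin> E} \<le> Xb" unfolding Xb_def using E(4) by linarith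
    then show "E \<in> {E. E \<subseteq> U \<and> card E = m \<and> card (E \<inter> D) < Lnat}
        \<union> (\<Union>\<pi>\<in>Perms. {E. E \<subseteq> U \<and> card E = m \<and> card {e\<in>E. \<pi> ` e \<notin> E} \<le> Xb
                   \<and> 3 * t + card S + Xb \<le> card (E \<inter> D)})"
      using E key k_def by (cases "card (E \<inter> D) < Lnat") auto
  qed
  have fPerms: "finite Perms" unfolding Perms_def
    using finite_permutations[OF fS] by (rule finite_subset[rotated]) auto
  have cPerms: "card Perms \<le> fact k"
  proof -
    have "card Perms \<le> card {\<pi>. \<pi> permutes S}" unfolding Perms_def
      using finite_permutations[OF fS] by (intro card_mono) auto
    also have "\<dots> = fact k" using card_permutations[OF k_def[symmetric] fS] .
    finally show ?thesis .
  qed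
  have "real (card {E. E \<subseteq> U \<and> card E = m \<and> (\<exists>\<pi>. \<pi> permutes S \<and> (\<forall>x\<in>S. \<pi> x \<noteq> x)
            \<and> real (card {e\<in>E. \<pi> ` e \<notin> E}) \<le> c * real k / 240)})
     \<le> real (card ({E. E \<subseteq> U \<and> card E = m \<and> card (E \<inter> D) < Lnat}
        \<union> (\<Union>\<pi>\<in>Perms. {E. E \<subseteq> U \<and> card E = m \<and> card {e\<in>E. \<pi> ` e \<notin> E} \<le> Xb
                   \<and> 3 * t + card S + Xb \<le> card (E \<inter> D)})))"
    using sub U_def by (intro real_card_mono_le) (auto intro: finite_subset[OF _ finite_graphs[of n "\<lambda>_. True"]])
  also have "\<dots> \<le> real (card {E. E \<subseteq> U \<and> card E = m \<and> card (E \<inter> D) < Lnat})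
        + real (card (\<Union>\<pi>\<in>Perms. {E. E \<subseteq> U \<and> card E = m \<and> card {e\<in>E. \<pi> ` e \<notin> E} \<le> Xb
                   \<and> 3 * t + card S + Xb \<le> card (E \<inter> D)}))"
    by (simp only: of_nat_add[symmetric] of_nat_le_iff card_Un_le)
  also have "\<dots> \<le> exp (-(93/100)*\<mu>) * real (card G)
        + fact k * (exp 1 * real (card D) * p^2 / real t)^t * real (card G)"
  proof (rule add_mono)
    have "real (card {E. E \<subseteq> U \<and> card E = m \<and> card (E \<inter> D) < Lnat})
       \<le> (\<Sum>j<Lnat. real (card D choose j) * p^j * real (card G)
        * ((real (card U) - real (card D)) / (real (card U) - real j))^(m - j))"
      using low_bound[of D n m Lnat] DU m unfolding U_def G_def p by simp
    also have "\<dots> = (\<Sum>j<Lnat. real (card D choose j) * p^j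
        * ((real (card U) - real (card D)) / (real (card U) - real j))^(m - j)) * real (card G)"
      by (simp add: sum_distrib_left sum_distrib_right mult_ac)
    also have "\<dots> \<le> exp (-(93/100)*\<mu>) * real (card G)"
    proof (rule mult_right_mono)
      have dN: "card D \<le> card U" using DU fU by (rule card_mono[rotated])
      show "(\<Sum>j<Lnat. real (card D choose j) * p^j
        * ((real (card U) - real (card D)) / (real (card U) - real j))^(m - j)) \<le> exp (-(93/100)*\<mu>)"
        unfolding Lnat_def
        by (rule lowT[of "card U" "card D" m p \<mu>]) (use N0 dN m mu0 in \<open>auto simp: U_def D_def p mu\<close>)
    qed simp
    finally show "real (card {E. E \<subseteq> U \<and> card E = m \<and> card (E \<inter> D) < Lnat}) \<le> exp (-(93/100)*\<mu>) * real (card G)" .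
  next
    have "real (card (\<Union>\<pi>\<in>Perms. {E. E \<subseteq> U \<and> card E = m \<and> card {e\<in>E. \<pi> ` e \<notin> E} \<le> Xb
                   \<and> 3 * t + card S + Xb \<le> card (E \<inter> D)}))
       \<le> (\<Sum>\<pi>\<in>Perms. real (card {E. E \<subseteq> U \<and> card E = m \<and> card {e\<in>E. \<pi> ` e \<notin> E} \<le> Xb
                   \<and> 3 * t + card S + Xb \<le> card (E \<inter> D)}))"
      using fPerms by (rule real_card_UN_le)
    also have "\<dots> \<le> (\<Sum>\<pi>\<in>Perms. real (card D choose t) * p^(2*t) * real (card G))"
    proof (rule sum_mono)
      fix \<pi> assume "\<pi> \<in> Perms"
      then have "\<pi> permutes S" "\<forall>x\<in>S. \<pi> x \<noteq> x" unfolding Perms_def by auto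
      then show "real (card {E. E \<subseteq> U \<and> card E = m \<and> card {e\<in>E. \<pi> ` e \<notin> E} \<le> Xb
                   \<and> 3 * t + card S + Xb \<le> card (E \<inter> D)}) \<le> real (card D choose t) * p^(2*t) * real (card G)"
        using high_bound[OF S(1) _ _ m, of \<pi> Xb t] unfolding U_def D_def G_def p by simp
    qed
    also have "\<dots> = real (card Perms) * (real (card D choose t) * p^(2*t)) * real (card G)" by simp
    also have "\<dots> \<le> fact k * (exp 1 * real (card D) * p^2 / real t)^t * real (card G)"
    proof (intro mult_right_mono mult_mono)
      show "real (card Perms) \<le> fact k" using cPerms by (metis of_nat_fact of_nat_le_iff)
      have "0 < t" unfolding t using ck0 k_def by simp
      then show "real (card D choose t) * p^(2*t) \<le> (exp 1 * real (card D) * p^2 / real t)^t"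
        by (rule highT)
    qed auto
    finally show "real (card (\<Union>\<pi>\<in>Perms. {E. E \<subseteq> U \<and> card E = m \<and> card {e\<in>E. \<pi> ` e \<notin> E} \<le> Xb
                   \<and> 3 * t + card S + Xb \<le> card (E \<inter> D)}))
       \<le> fact k * (exp 1 * real (card D) * p^2 / real t)^t * real (card G)" .
  qed
  finally show ?thesis unfolding U_def D_def k_def G_def by (simp add: algebra_simps)
qed

lemma per_k:
  fixes n m k t :: nat and c \<mu> p d :: real
  assumes H1: "7000 \<le> ln (real n)" and H2: "10 * ln (real n) \<le> sqrt (real n) / 900"
    and H3: "17 * ln (real n) \<le> 5000 * real n powr (1/30)"
    and c: "10^4 \<le> c" "c \<le> real n / 10^10" and mreal: "real m = c * real n"
    and k: "2 \<le> k" "k \<le> n" "exp (-c/6) * real n \<le> real k"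
    and p: "p = real m / real (n choose 2)"
    and d: "d = real ((n choose 2) - ((n - k) choose 2))"
    and mu: "\<mu> = p * d" and t: "t = nat \<lceil>c * real k / 900\<rceil>"
  shows "c * real k \<le> \<mu>"
    and "real (n choose k) * (exp (-(93/100)*\<mu>) + fact k * (exp 1 * d * p^2 / real t)^t)
         \<le> 2 * real n powr (-17)"
proof -
  have n0: "0 < real n" using H1 by (cases n) auto
  have nbig: "100 \<le> real n"
  proof -
    have "1 + ln (real n) \<le> exp (ln (real n))" by (rule exp_ge_add_one_self)
    then show ?thesis using n0 H1 by simp
  qed
  have k0: "0 < real k" using k by simp
  have kn: "real k \<le> real n" using k by simp
  have c0: "0 < c" using c by simp
  have N2: "real (n choose 2) = real n * (real n - 1) / 2" by (rule real_choose2)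
  have Nk2: "real ((n - k) choose 2) = (real n - real k) * (real n - real k - 1) / 2"
    using real_choose2[of "n - k"] k by (simp add: of_nat_diff)
  have dd: "d = real k * (2 * real n - real k - 1) / 2"
  proof -
    have "(n - k) choose 2 \<le> n choose 2" by (rule binomial_right_mono) simp
    then have "d = real (n choose 2) - real ((n - k) choose 2)" using d by (simp add: of_nat_diff)
    then have "2 * d = real n * (real n - 1) - (real n - real k) * (real n - real k - 1)"
      unfolding N2 Nk2 by simp
    also have "\<dots> = real k * (2 * real n - real k - 1)" by (simp add: algebra_simps)
    finally show ?thesis by simp
  qed
  have nm1: "0 < real n - 1" using nbig by simp
  have pp: "p = 2 * c / (real n - 1)"
  proof -
    have "p = c * real n / (real n * (real n - 1) / 2)" using p mreal N2 by simp
    also have "\<dots> = 2 * c / (real n - 1)" using n0 nm1 by (simp add: field_simps)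
    finally show ?thesis .
  qed
  have mueq: "\<mu> = c * real k * ((2 * real n - real k - 1) / (real n - 1))"
    using mu pp dd nm1 by (simp add: field_simps)
  have ck0: "0 < c * real k" using c0 k0 by simp
  show mu1: "c * real k \<le> \<mu>"
  proof -
    have "1 \<le> (2 * real n - real k - 1) / (real n - 1)" using kn nbig by (simp add: field_simps)
    then have "c * real k * 1 \<le> c * real k * ((2 * real n - real k - 1) / (real n - 1))"
      using ck0 by (intro mult_left_mono) auto
    then show ?thesis unfolding mueq by simp
  qed
  have mu2: "1.95 * c * real k \<le> \<mu>" if "real k \<le> real n / 20"
  proof -
    have "1.95 \<le> (2 * real n - real k - 1) / (real n - 1)" using that nbig by (simp add: field_simps)
    then have "c * real k * 1.95 \<le> c * real k * ((2 * real n - real k - 1) / (real n - 1))"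
      using ck0 by (intro mult_left_mono) auto
    then show ?thesis unfolding mueq by simp
  qed
  have A: "real (n choose k) * exp (-(93/100)*\<mu>) \<le> real n powr (-17)"
    by (rule boundA[OF H1 H3 c(1) k mu1 mu2])
  define x where "x = 20000 * c / real n"
  have x0: "0 < x" unfolding x_def using c0 n0 by simp
  have x1: "x \<le> 1" unfolding x_def using c n0 by (simp add: field_simps)
  have t0: "c * real k / 900 \<le> real t" unfolding t by (rule real_nat_ceiling_ge)
  have tpos: "0 < real t" using t0 ck0 by linarith
  have d0: "0 \<le> d"
  proof -
    have "0 \<le> 2*real n - real k - 1" using kn nbig by linarith
    then show ?thesis unfolding dd using k0 by simp
  qed
  have base0: "0 \<le> exp 1 * d * p^2 / real t" using d0 tpos by simp
  have basex: "exp 1 * d * p^2 / real t \<le> x"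
  proof -
    have p0: "0 \<le> p" unfolding pp using c0 nbig by simp
    have pb: "p \<le> 8 * c / (3 * real n)" unfolding pp using c0 nbig by (simp add: field_simps)
    have p2: "p^2 \<le> (8 * c / (3 * real n))^2" using p0 pb by (intro power_mono)
    have db: "d \<le> real k * real n" unfolding dd using k0 nbig by (simp add: field_simps)
    have "exp 1 * d * p^2 \<le> 3 * (real k * real n) * (8 * c / (3 * real n))^2"
      using exp_le db d0 p2 by (intro mult_mono) auto
    also have "\<dots> = real k * c * (c * 64 / (3 * real n))" using n0 by (simp add: field_simps power2_eq_square)
    finally have num: "exp 1 * d * p^2 \<le> real k * c * (c * 64 / (3 * real n))" .
    have "exp 1 * d * p^2 / real t \<le> exp 1 * d * p^2 / (c * real k / 900)"
      using t0 ck0 d0 by (intro divide_left_mono) auto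
    also have "\<dots> \<le> real k * c * (c * 64 / (3 * real n)) / (c * real k / 900)"
      using num ck0 by (intro divide_right_mono) auto
    also have "\<dots> = 19200 * c / real n" using ck0 c0 k0 n0 by (simp add: field_simps)
    also have "\<dots> \<le> x" unfolding x_def using c0 n0 by (simp add: field_simps)
    finally show ?thesis .
  qed
  have "(exp 1 * d * p^2 / real t)^t \<le> x^t" using base0 basex by (intro power_mono)
  also have "\<dots> = x powr (real t)" using x0 by (simp add: powr_realpow)
  also have "\<dots> \<le> x powr (c * real k / 900)" using x0 x1 t0 by (intro powr_mono') auto
  finally have hb: "(exp 1 * d * p^2 / real t)^t \<le> x powr (c * real k / 900)" .
  have "real (n choose k) * (fact k * (exp 1 * d * p^2 / real t)^t)
      = (real (n choose k) * fact k) * (exp 1 * d * p^2 / real t)^t" by simp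
  also have "\<dots> \<le> real n ^ k * x powr (c * real k / 900)"
    using binom_le_pow[of n k] hb base0 by (intro mult_mono) auto
  also have "\<dots> \<le> real n powr (-17)"
    unfolding x_def by (rule boundB[OF H1 H2 c k(1) k(3)])
  finally have B: "real (n choose k) * (fact k * (exp 1 * d * p^2 / real t)^t) \<le> real n powr (-17)" .
  show "real (n choose k) * (exp (-(93/100)*\<mu>) + fact k * (exp 1 * d * p^2 / real t)^t)
         \<le> 2 * real n powr (-17)"
    using A B by (simp add: distrib_left)
qed

lemma bad_witness:
  fixes n m :: nat and c :: real
  assumes E: "E \<subseteq> all_edges n" "card E = m" and m0: "0 < m" and mreal: "real m = c * real n"
    and notP: "\<not> (\<forall>\<beta>::real. max (exp (- c / 6)) (1 / real n) \<le> \<beta> \<longrightarrow> \<beta> \<le> 1 \<longrightarrow>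
                            asymmetric n E \<beta> (\<beta> / 240))"
  shows "\<exists>S. S \<subseteq> {0..<n} \<and> 2 \<le> card S \<and> exp (-c/6) * real n \<le> real (card S) \<and>
     (\<exists>\<pi>. \<pi> permutes S \<and> (\<forall>x\<in>S. \<pi> x \<noteq> x) \<and> real (card {e\<in>E. \<pi> ` e \<notin> E}) \<le> c * real (card S) / 240)"
proof -
  obtain \<beta> :: real where b: "max (exp (- c / 6)) (1 / real n) \<le> \<beta>" "\<beta> \<le> 1"
    and na: "\<not> asymmetric n E \<beta> (\<beta> / 240)" using notP by auto
  obtain \<pi> where pi: "\<pi> permutes {0..<n}" "real (card (fixed_points n \<pi>)) \<le> (1 - \<beta>) * real n"
    and aut: "\<not> AUT E \<pi> < 1 - \<beta>/240"
    using na unfolding asymmetric_def by auto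
  define S where "S = {v \<in> {0..<n}. \<pi> v \<noteq> v}"
  have Ssub: "S \<subseteq> {0..<n}" unfolding S_def by auto
  have fS: "finite S" using Ssub finite_subset by blast
  have n0: "0 < n" using m0 mreal by (cases n) auto
  have cardS: "card S = n - card (fixed_points n \<pi>)"
  proof -
    have "{0..<n} = S \<union> fixed_points n \<pi>" "S \<inter> fixed_points n \<pi> = {}"
      unfolding S_def fixed_points_def by auto
    moreover have "card (S \<union> fixed_points n \<pi>) = card S + card (fixed_points n \<pi>)"
      by (rule card_Un_disjoint) (use fS \<open>S \<inter> fixed_points n \<pi> = {}\<close> in \<open>auto simp: fixed_points_def\<close>)
    ultimately have "card {0..<n} = card S + card (fixed_points n \<pi>)" by simp
    then show ?thesis by simp
  qed
  have fpn: "card (fixed_points n \<pi>) \<le> n"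
  proof -
    have "card (fixed_points n \<pi>) \<le> card {0..<n}" unfolding fixed_points_def by (intro card_mono) auto
    then show ?thesis by simp
  qed
  have bS: "\<beta> * real n \<le> real (card S)" using cardS pi(2) fpn by (simp add: of_nat_diff algebra_simps)
  have b1: "1 / real n \<le> \<beta>" "exp (-c/6) \<le> \<beta>" using b by auto
  have "1 \<le> \<beta> * real n" using b1 n0 by (simp add: field_simps)
  then have S1: "1 \<le> card S" using bS by linarith
  have Sexp: "exp (-c/6) * real n \<le> real (card S)"
    using b1 bS n0 by (meson mult_right_mono of_nat_0_le_iff order_trans)
  have permS: "\<pi> permutes S"
    using pi(1) unfolding permutes_def S_def by auto
  have mv: "\<forall>x\<in>S. \<pi> x \<noteq> x" unfolding S_def by auto
  have S2: "2 \<le> card S"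
  proof -
    obtain u where u: "u \<in> S" using S1 by (metis card.empty ex_in_conv not_one_le_zero)
    have "\<pi> u \<in> S"
    proof -
      have inj: "inj \<pi>" using permutes_inj[OF permS] .
      have "\<pi> (\<pi> u) \<noteq> \<pi> u" using mv u inj by (metis injD)
      moreover have "\<pi> u \<in> {0..<n}" using u Ssub permutes_in_image[OF pi(1)] by auto
      ultimately show ?thesis unfolding S_def by auto
    qed
    then have "{u, \<pi> u} \<subseteq> S" using u by auto
    moreover have "card {u, \<pi> u} = 2" using mv u by auto
    ultimately show ?thesis using fS by (metis card_mono)
  qed
  have fE: "finite E" using E finite_all_edges finite_subset by blast
  have split: "card {e\<in>E. \<pi> ` e \<notin> E} = m - card {e\<in>E. \<pi> ` e \<in> E}"
  proof -
    have eq: "E = {e\<in>E. \<pi> ` e \<notin> E} \<union> {e\<in>E. \<pi> ` e \<in> E}" by auto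
    have "card ({e\<in>E. \<pi> ` e \<notin> E} \<union> {e\<in>E. \<pi> ` e \<in> E}) = card {e\<in>E. \<pi> ` e \<notin> E} + card {e\<in>E. \<pi> ` e \<in> E}"
      by (rule card_Un_disjoint) (use fE in auto)
    then have "card E = card {e\<in>E. \<pi> ` e \<notin> E} + card {e\<in>E. \<pi> ` e \<in> E}"
      using eq by simp
    then show ?thesis using E by simp
  qed
  have "1 - \<beta>/240 \<le> real (card {e\<in>E. \<pi> ` e \<in> E}) / real m"
    using aut E unfolding AUT_def by simp
  then have "real m * (1 - \<beta>/240) \<le> real (card {e\<in>E. \<pi> ` e \<in> E})"
    using m0 by (simp add: field_simps)
  moreover have "card {e\<in>E. \<pi> ` e \<in> E} \<le> m" using E fE card_mono[of E "{e\<in>E. \<pi> ` e \<in> E}"] by auto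
  ultimately have "real (card {e\<in>E. \<pi> ` e \<notin> E}) \<le> real m * \<beta> / 240"
    using split by (simp add: of_nat_diff algebra_simps)
  also have "\<dots> = c * (\<beta> * real n) / 240" using mreal by simp
  also have "\<dots> \<le> c * real (card S) / 240"
  proof -
    have "c = real m / real n" using mreal n0 by (simp add: field_simps)
    then have "0 \<le> c" by simp
    then show ?thesis using bS by (intro divide_right_mono mult_left_mono) auto
  qed
  finally show ?thesis using Ssub S2 Sexp permS mv by blast
qed

lemma main_fixed:
  fixes n m :: nat and c :: real
  assumes H1: "7000 \<le> ln (real n)" and H2: "10 * ln (real n) \<le> sqrt (real n) / 900"
    and H3: "17 * ln (real n) \<le> 5000 * real n powr (1/30)"
    and mreal: "real m = c * real n" and c: "10^4 \<le> c" "c \<le> real n / 10^10"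
  shows "prob_Gnm n m (\<lambda>E. \<forall>\<beta>::real. max (exp (- c / 6)) (1 / real n) \<le> \<beta> \<longrightarrow> \<beta> \<le> 1 \<longrightarrow>
                            asymmetric n E \<beta> (\<beta> / 240)) \<ge> 1 - real n powr (-15)"
proof -
  define P where "P = (\<lambda>E. \<forall>\<beta>::real. max (exp (- c / 6)) (1 / real n) \<le> \<beta> \<longrightarrow> \<beta> \<le> 1 \<longrightarrow>
                            asymmetric n E \<beta> (\<beta> / 240))"
  define U where "U = all_edges n"
  define NN where "NN = n choose 2"
  define G where "G = {E. E \<subseteq> U \<and> card E = m}"
  define Good where "Good = {E \<in> G. P E}"
  define SS where "SS = {S. S \<subseteq> {0..<n} \<and> 2 \<le> card S \<and> exp (-c/6) * real n \<le> real (card S)}"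
  define BadS where "BadS = (\<lambda>S. {E. E \<subseteq> U \<and> card E = m \<and> (\<exists>\<pi>. \<pi> permutes S \<and> (\<forall>x\<in>S. \<pi> x \<noteq> x)
            \<and> real (card {e\<in>E. \<pi> ` e \<notin> E}) \<le> c * real (card S) / 240)})"
  define p where "p = real m / real NN"
  define d where "d = (\<lambda>k. real (NN - ((n - k) choose 2)))"
  define mu where "mu = (\<lambda>k. p * d k)"
  define t where "t = (\<lambda>k::nat. nat \<lceil>c * real k / 900\<rceil>)"
  define g where "g = (\<lambda>k. exp (-(93/100) * mu k) + fact k * (exp 1 * d k * p^2 / real (t k))^(t k))"
  have n0: "0 < real n" using H1 by (cases n) auto
  have nbig: "100 \<le> real n"
  proof -
    have "1 + ln (real n) \<le> exp (ln (real n))" by (rule exp_ge_add_one_self)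
    then show ?thesis using n0 H1 by simp
  qed
  have c0: "0 < c" using c by simp
  have UNN: "card U = NN" unfolding U_def NN_def by (rule card_all_edges)
  have fU: "finite U" unfolding U_def by (rule finite_all_edges)
  have mNN: "m \<le> NN"
  proof -
    have "real m \<le> real n * real n / 10^10" using mreal c n0 by (simp add: field_simps mult_right_mono)
    also have "\<dots> \<le> real n * (real n - 1) / 2" using nbig by (simp add: field_simps)
    also have "\<dots> = real NN" unfolding NN_def by (simp add: real_choose2)
    finally show ?thesis by simp
  qed
  have m0: "0 < m" using mreal c0 n0 by (metis mult_pos_pos of_nat_0_less_iff)
  have NN0: "0 < NN" using mNN m0 by simp
  have cardG: "card G = NN choose m" unfolding G_def using n_subsets[OF fU] UNN by simp
  have G0: "0 < real (card G)" unfolding cardG using mNN by simp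
  have fG: "finite G" unfolding G_def U_def by (rule finite_graphs)
  have GG: "graphs_nm n m = G" unfolding graphs_nm_def G_def U_def ..
  have fSS: "finite SS" unfolding SS_def
    by (rule finite_subset[of _ "Pow {0..<n}"]) auto
  have sub: "G - Good \<subseteq> (\<Union>S\<in>SS. BadS S)"
  proof
    fix E assume "E \<in> G - Good"
    then have E: "E \<subseteq> all_edges n" "card E = m" "\<not> P E" unfolding G_def Good_def U_def by auto
    obtain S where "S \<subseteq> {0..<n} \<and> 2 \<le> card S \<and> exp (-c/6) * real n \<le> real (card S) \<and>
     (\<exists>\<pi>. \<pi> permutes S \<and> (\<forall>x\<in>S. \<pi> x \<noteq> x) \<and> real (card {e\<in>E. \<pi> ` e \<notin> E}) \<le> c * real (card S) / 240)"
      using bad_witness[OF E(1,2) m0 mreal] E(3) unfolding P_def by blast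
    then show "E \<in> (\<Union>S\<in>SS. BadS S)" unfolding SS_def BadS_def U_def using E by auto
  qed
  have perS: "real (card (BadS S)) \<le> g (card S) * real (card G)" if "S \<in> SS" for S
  proof -
    have S: "S \<subseteq> {0..<n}" "2 \<le> card S" "exp (-c/6) * real n \<le> real (card S)"
      using that unfolding SS_def by auto
    have kn: "card S \<le> n" using S(1) card_mono[of "{0..<n}" S] by simp
    have dS: "real (card (DS n S)) = d (card S)" unfolding d_def NN_def using card_DS[OF S(1)] by simp
    have mu1: "c * real (card S) \<le> mu (card S)"
      using per_k(1)[OF H1 H2 H3 c mreal S(2) kn S(3), of p "d (card S)" "mu (card S)" "t (card S)"]
      unfolding p_def d_def mu_def t_def NN_def by simp
    have "real (card (BadS S)) \<le> (exp (-(93/100)*mu (card S)) + fact (card S) * (exp 1 * real (card (DS n S)) * p^2 / real (t (card S)))^(t (card S)))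
        * real (card {E. E \<subseteq> all_edges n \<and> card E = m})"
      unfolding BadS_def U_def
      by (rule bad_S_bound[OF S(1) S(2) _ c(1)]) (use mNN NN0 UNN mu1 dS in \<open>auto simp: U_def p_def mu_def t_def\<close>)
    then show ?thesis unfolding g_def dS G_def U_def .
  qed
  have gk: "real (card {S \<in> SS. card S = k}) * g k \<le> 2 * real n powr (-17)" for k
  proof (cases "{S \<in> SS. card S = k} = {}")
    case True show ?thesis unfolding True by simp
  next
    case False
    then obtain S where S: "S \<in> SS" "card S = k" by auto
    then have k: "2 \<le> k" "k \<le> n" "exp (-c/6) * real n \<le> real k"
      unfolding SS_def using card_mono[of "{0..<n}" S] by auto
    have g0: "0 \<le> g k" unfolding g_def d_def p_def
      by (intro add_nonneg_nonneg mult_nonneg_nonneg zero_le_power divide_nonneg_nonneg) auto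
    have "card {S \<in> SS. card S = k} \<le> card {S. S \<subseteq> {0..<n} \<and> card S = k}"
      unfolding SS_def by (intro card_mono) (auto intro: finite_subset[of _ "Pow {0..<n}"])
    also have "\<dots> = n choose k" using n_subsets[of "{0..<n}" k] by simp
    finally have "real (card {S \<in> SS. card S = k}) * g k \<le> real (n choose k) * g k"
      using g0 by (intro mult_right_mono) auto
    also have "\<dots> \<le> 2 * real n powr (-17)"
      unfolding g_def
      by (rule per_k(2)[OF H1 H2 H3 c mreal k]) (auto simp: p_def d_def mu_def t_def NN_def)
    finally show ?thesis .
  qed
  have "real (card (G - Good)) \<le> real (card (\<Union>S\<in>SS. BadS S))"
    using sub fU by (intro real_card_mono_le) (auto simp: BadS_def intro: finite_subset[OF _ finite_graphs[of n "\<lambda>_. True"]] simp: U_def)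
  also have "\<dots> \<le> (\<Sum>S\<in>SS. real (card (BadS S)))" using fSS by (rule real_card_UN_le)
  also have "\<dots> \<le> (\<Sum>S\<in>SS. g (card S) * real (card G))" using perS by (intro sum_mono) auto
  also have "\<dots> = (\<Sum>S\<in>SS. g (card S)) * real (card G)" by (simp add: sum_distrib_right)
  also have "(\<Sum>S\<in>SS. g (card S)) = (\<Sum>k\<in>{..n}. \<Sum>S\<in>{S \<in> SS. card S = k}. g (card S))"
  proof -
    have "card ` SS \<subseteq> {..n}" unfolding SS_def using card_mono[of "{0..<n}"] by fastforce
    from sum.group[OF fSS finite_atMost this, where h="\<lambda>S. g (card S)"] show ?thesis by simp
  qed
  also have "\<dots> = (\<Sum>k\<in>{..n}. real (card {S \<in> SS. card S = k}) * g k)"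
    by (intro sum.cong refl) simp
  also have "\<dots> \<le> (\<Sum>k\<in>{..n}. 2 * real n powr (-17))" by (intro sum_mono gk)
  also have "\<dots> = (real n + 1) * 2 * real n powr (-17)" by simp
  finally have bad: "real (card (G - Good)) \<le> ((real n + 1) * 2 * real n powr (-17)) * real (card G)"
    using G0 by (simp add: mult_right_mono)
  have "(real n + 1) * 2 * real n powr (-17) \<le> real n powr (-15)"
  proof -
    have pa: "real n powr 2 * real n powr (-17) = real n powr (2 + (-17))" by (rule powr_add[symmetric])
    have "real n powr (-15) = real n powr 2 * real n powr (-17)" unfolding pa by simp
    moreover have "(real n + 1) * 2 \<le> real n powr 2"
    proof -
      have "100 * real n \<le> real n * real n" using nbig by (intro mult_right_mono) auto
      moreover have "real n powr 2 = real n * real n" using n0 by (simp add: power2_eq_square)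
      moreover have "(real n + 1) * 2 = 2 * real n + 2" by simp
      ultimately show ?thesis using nbig by linarith
    qed
    ultimately show ?thesis by (simp add: mult_right_mono)
  qed
  then have "((real n + 1) * 2 * real n powr (-17)) * real (card G) \<le> real n powr (-15) * real (card G)"
    using G0 by (intro mult_right_mono) auto
  then have bad2: "real (card (G - Good)) \<le> real n powr (-15) * real (card G)"
    using bad by linarith
  have GoodG: "Good \<subseteq> G" unfolding Good_def by auto
  have fGood: "finite Good" using fG GoodG finite_subset by blast
  have cd: "card (G - Good) = card G - card Good" by (rule card_Diff_subset[OF fGood GoodG])
  have "card Good \<le> card G" by (rule card_mono[OF fG GoodG])
  then have "real (card Good) = real (card G) - real (card (G - Good))"
    using cd by (simp add: of_nat_diff)
  then have "prob_Gnm n m P = 1 - real (card (G - Good)) / real (card G)"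
    unfolding prob_Gnm_def GG Good_def using G0 by (simp add: field_simps)
  also have "\<dots> \<ge> 1 - real n powr (-15)"
    using bad2 G0 by (simp add: field_simps)
  finally show ?thesis unfolding P_def .
qed

theorem theorem1p4:
  shows "\<exists>N::nat. \<forall>n\<ge>N. \<forall>m::nat. \<forall>c::real.
     real m = c * real n \<longrightarrow> 10^4 \<le> c \<longrightarrow> c \<le> real n / 10^10 \<longrightarrow>
     prob_Gnm n m (\<lambda>E. \<forall>\<beta>::real. max (exp (- c / 6)) (1 / real n) \<le> \<beta> \<longrightarrow> \<beta> \<le> 1 \<longrightarrow>
                            asymmetric n E \<beta> (\<beta> / 240))
       \<ge> 1 - real n powr (-15)"
proof -
  have ev: "eventually (\<lambda>n::nat. 7000 \<le> ln (real n) \<and> 10 * ln (real n) \<le> sqrt (real n) / 900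
      \<and> 17 * ln (real n) \<le> 5000 * real n powr (1/30)) sequentially"
    by (intro eventually_conj; real_asymp)
  then obtain N where N: "\<And>n. N \<le> n \<Longrightarrow> 7000 \<le> ln (real n) \<and> 10 * ln (real n) \<le> sqrt (real n) / 900
      \<and> 17 * ln (real n) \<le> 5000 * real n powr (1/30)"
    unfolding eventually_sequentially by blast
  show ?thesis
  proof (intro exI[of _ N] allI impI)
    fix n m :: nat and c :: real
    assume "N \<le> n" "real m = c * real n" "10^4 \<le> c" "c \<le> real n / 10^10"
    then show "prob_Gnm n m (\<lambda>E. \<forall>\<beta>::real. max (exp (- c / 6)) (1 / real n) \<le> \<beta> \<longrightarrow> \<beta> \<le> 1 \<longrightarrow>
                            asymmetric n E \<beta> (\<beta> / 240))
       \<ge> 1 - real n powr (-15)"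
      using N[of n] by (intro main_fixed) auto
  qed
qed

end
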